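(* Let $L$ be a totally ordered normal incline and let $A$ be a $3\times 3$ completely positive matrix over $L$. Then $A$ is LU-completely positive or UL-completely positive (or both).
   Context: An incline is a nonempty set $L$ with binary operations $\oplus,\otimes$ such that $(L,\oplus)$ is a semilattice ($\oplus$ associative, commutative, idempotent), $(L,\otimes)$ is a semigroup, $x\otimes(y\oplus z)=(x\otimes y)\oplus(x\otimes z)$ and $x\oplus(x\otimes y)=x$ for all $x,y,z$. The order is $x\le y\iff x\oplus y=y$; $L$ is totally ordered if this order is total, and commutative if $\otimes$ is commutative. An r-ideal is a nonempty $J\subseteq L$ closed under $\oplus$ and under multiplication by arbitrary elements of $L$; a lattice ideal is a nonempty $J\subseteq L$ closed under $\oplus$ and downward closed. A commutative incline $L$ is normal if it has an additive identity $\mathbf{0}$ and a multiplicative identity $\mathbf{1}$ and: every singly generated r-ideal is a lattice ideal (LI-property); for each $x$ there is a unique $c$ with $c\otimes c=x$; $x\otimes y\le(x\otimes x)\oplus(y\otimes y)$ for all $x,y$. Matrix product: $(BC)_{ij}=\bigoplus_k b_{ik}\otimes c_{kj}$; $B^T$ is the transpose. $A$ is completely positive if $A=BB^T$ for some $3\times k$ matrix $B$ over $L$ all of whose entries are of the form $c\otimes c$. $A$ is UL-completely positive if $A=UU^T$ for some upper triangular matrix $U$ over $L$, and LU-completely positive if $A=CC^T$ for some lower triangular matrix $C$ over $L$. *)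

theory Defs
  imports Main
begin

text \<open>An incline is modelled on a type 'a (the carrier L is the whole, nonempty, type)
  with operations add (oplus) and mul (otimes).\<close>

definition incline :: "('a \<Rightarrow> 'a \<Rightarrow> 'a) \<Rightarrow> ('a \<Rightarrow> 'a \<Rightarrow> 'a) \<Rightarrow> bool" where
  "incline add mul \<longleftrightarrow>
     (\<forall>x y z. add (add x y) z = add x (add y z)) \<and>
     (\<forall>x y. add x y = add y x) \<and>
     (\<forall>x. add x x = x) \<and>
     (\<forall>x y z. mul (mul x y) z = mul x (mul y z)) \<and>
     (\<forall>x y z. mul x (add y z) = add (mul x y) (mul x z)) \<and>
     (\<forall>x y. add x (mul x y) = x)"

definition inc_le :: "('a \<Rightarrow> 'a \<Rightarrow> 'a) \<Rightarrow> 'a \<Rightarrow> 'a \<Rightarrow> bool" where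
  "inc_le add x y \<longleftrightarrow> add x y = y"

definition totally_ordered :: "('a \<Rightarrow> 'a \<Rightarrow> 'a) \<Rightarrow> bool" where
  "totally_ordered add \<longleftrightarrow> (\<forall>x y. inc_le add x y \<or> inc_le add y x)"

definition commutative :: "('a \<Rightarrow> 'a \<Rightarrow> 'a) \<Rightarrow> bool" where
  "commutative mul \<longleftrightarrow> (\<forall>x y. mul x y = mul y x)"

definition r_ideal :: "('a \<Rightarrow> 'a \<Rightarrow> 'a) \<Rightarrow> ('a \<Rightarrow> 'a \<Rightarrow> 'a) \<Rightarrow> 'a set \<Rightarrow> bool" where
  "r_ideal add mul J \<longleftrightarrow> J \<noteq> {} \<and> (\<forall>x\<in>J. \<forall>y\<in>J. add x y \<in> J) \<and>
     (\<forall>x\<in>J. \<forall>a. mul a x \<in> J \<and> mul x a \<in> J)"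

definition lattice_ideal :: "('a \<Rightarrow> 'a \<Rightarrow> 'a) \<Rightarrow> 'a set \<Rightarrow> bool" where
  "lattice_ideal add J \<longleftrightarrow> J \<noteq> {} \<and> (\<forall>x\<in>J. \<forall>y\<in>J. add x y \<in> J) \<and>
     (\<forall>x\<in>J. \<forall>y. inc_le add y x \<longrightarrow> y \<in> J)"

definition gen_r_ideal :: "('a \<Rightarrow> 'a \<Rightarrow> 'a) \<Rightarrow> ('a \<Rightarrow> 'a \<Rightarrow> 'a) \<Rightarrow> 'a \<Rightarrow> 'a set" where
  "gen_r_ideal add mul x = \<Inter>{J. r_ideal add mul J \<and> x \<in> J}"

definition is_zero :: "('a \<Rightarrow> 'a \<Rightarrow> 'a) \<Rightarrow> 'a \<Rightarrow> bool" where
  "is_zero add z \<longleftrightarrow> (\<forall>x. add z x = x)"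

definition normal_incline :: "('a \<Rightarrow> 'a \<Rightarrow> 'a) \<Rightarrow> ('a \<Rightarrow> 'a \<Rightarrow> 'a) \<Rightarrow> bool" where
  "normal_incline add mul \<longleftrightarrow>
     incline add mul \<and> commutative mul \<and>
     (\<exists>z. is_zero add z) \<and>
     (\<exists>e. \<forall>x. mul e x = x \<and> mul x e = x) \<and>
     (\<forall>x. lattice_ideal add (gen_r_ideal add mul x)) \<and>
     (\<forall>x. \<exists>!c. mul c c = x) \<and>
     (\<forall>x y. inc_le add (mul x y) (add (mul x x) (mul y y)))"

fun bigsum :: "('a \<Rightarrow> 'a \<Rightarrow> 'a) \<Rightarrow> (nat \<Rightarrow> 'a) \<Rightarrow> nat \<Rightarrow> 'a" where
  "bigsum add f 0 = undefined"
| "bigsum add f (Suc 0) = f 0"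
| "bigsum add f (Suc (Suc n)) = add (bigsum add f (Suc n)) (f (Suc n))"

text \<open>Matrices are functions nat => nat => 'a (only the relevant index range matters).
  matmul add mul B C k is the product of B (with k columns) and C (with k rows).\<close>
definition matmul :: "('a \<Rightarrow> 'a \<Rightarrow> 'a) \<Rightarrow> ('a \<Rightarrow> 'a \<Rightarrow> 'a) \<Rightarrow>
    (nat \<Rightarrow> nat \<Rightarrow> 'a) \<Rightarrow> (nat \<Rightarrow> nat \<Rightarrow> 'a) \<Rightarrow> nat \<Rightarrow> nat \<Rightarrow> nat \<Rightarrow> 'a" where
  "matmul add mul B C k i j = bigsum add (\<lambda>l. mul (B i l) (C l j)) k"

definition transp_mat :: "(nat \<Rightarrow> nat \<Rightarrow> 'a) \<Rightarrow> nat \<Rightarrow> nat \<Rightarrow> 'a" where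
  "transp_mat B i j = B j i"

definition completely_positive3 :: "('a \<Rightarrow> 'a \<Rightarrow> 'a) \<Rightarrow> ('a \<Rightarrow> 'a \<Rightarrow> 'a) \<Rightarrow>
    (nat \<Rightarrow> nat \<Rightarrow> 'a) \<Rightarrow> bool" where
  "completely_positive3 add mul A \<longleftrightarrow>
     (\<exists>k B. k \<ge> 1 \<and> (\<forall>i<3. \<forall>l<k. \<exists>c. B i l = mul c c) \<and>
        (\<forall>i<3. \<forall>j<3. A i j = matmul add mul B (transp_mat B) k i j))"

definition UL_completely_positive3 :: "('a \<Rightarrow> 'a \<Rightarrow> 'a) \<Rightarrow> ('a \<Rightarrow> 'a \<Rightarrow> 'a) \<Rightarrow>
    (nat \<Rightarrow> nat \<Rightarrow> 'a) \<Rightarrow> bool" where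
  "UL_completely_positive3 add mul A \<longleftrightarrow>
     (\<exists>U. (\<forall>i<3. \<forall>j<3. j < i \<longrightarrow> is_zero add (U i j)) \<and>
        (\<forall>i<3. \<forall>j<3. A i j = matmul add mul U (transp_mat U) 3 i j))"

definition LU_completely_positive3 :: "('a \<Rightarrow> 'a \<Rightarrow> 'a) \<Rightarrow> ('a \<Rightarrow> 'a \<Rightarrow> 'a) \<Rightarrow>
    (nat \<Rightarrow> nat \<Rightarrow> 'a) \<Rightarrow> bool" where
  "LU_completely_positive3 add mul A \<longleftrightarrow>
     (\<exists>C. (\<forall>i<3. \<forall>j<3. i < j \<longrightarrow> is_zero add (C i j)) \<and>
        (\<forall>i<3. \<forall>j<3. A i j = matmul add mul C (transp_mat C) 3 i j))"

end

theory Submission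
  imports Defs
begin

locale ninc =
  fixes add mul :: "'a \<Rightarrow> 'a \<Rightarrow> 'a"
  assumes N: "normal_incline add mul" and T: "totally_ordered add"
begin

lemma inc: "incline add mul" using N unfolding normal_incline_def by blast

lemma A: "abel_semigroup add"
  using inc unfolding incline_def by unfold_locales auto

lemma M: "abel_semigroup mul"
  using N unfolding normal_incline_def commutative_def incline_def by unfold_locales auto

interpretation a: abel_semigroup add by (rule A)
interpretation m: abel_semigroup mul by (rule M)

lemma mul_comm: "mul x y = mul y x" by (rule m.commute)
lemma idem: "add x x = x" using inc unfolding incline_def by blast
lemma dist: "mul x (add y z) = add (mul x y) (mul x z)" using inc unfolding incline_def by blast
lemma absorb: "add x (mul x y) = x" using inc unfolding incline_def by blast
lemma absorb2: "add (mul x y) x = x" using absorb a.commute by metis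

abbreviation le where "le x y \<equiv> inc_le add x y"

lemma le_def': "le x y \<longleftrightarrow> add x y = y" by (simp add: inc_le_def)

lemma le_refl: "le x x" by (simp add: le_def' idem)
lemma le_trans: "le x y \<Longrightarrow> le y z \<Longrightarrow> le x z"
  unfolding le_def' proof -
  assume h1: "add x y = y" and h2: "add y z = z"
  have "add x z = add x (add y z)" using h2 by simp
  also have "\<dots> = add (add x y) z" by (simp add: a.assoc)
  also have "\<dots> = z" using h1 h2 by simp
  finally show "add x z = z" .
qed
lemma le_antisym: "le x y \<Longrightarrow> le y x \<Longrightarrow> x = y"
  unfolding le_def' using a.commute by simp
lemma le_mul: "le (mul x y) x" unfolding le_def' by (rule absorb2)
lemma le_mul2: "le (mul x y) y" using le_mul[of y x] by (simp add: m.commute)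
lemma mono: "le x y \<Longrightarrow> le (mul z x) (mul z y)"
  unfolding le_def' by (simp add: dist[symmetric])
lemma mono2: "le x y \<Longrightarrow> le u v \<Longrightarrow> le (mul x u) (mul y v)"
proof -
  assume "le x y" "le u v"
  then have "le (mul x u) (mul x v)" "le (mul v x) (mul v y)" using mono by blast+
  then show ?thesis using le_trans by (simp add: m.commute)
qed
lemma le_addI: "le a c \<Longrightarrow> le b c \<Longrightarrow> le (add a b) c"
  unfolding le_def' by (simp add: a.assoc)
lemma le_add1: "le a (add a b)"
  unfolding le_def' by (simp add: a.assoc[symmetric] idem)
lemma le_add2: "le b (add a b)"
  using le_add1[of b a] by (simp add: a.commute)
lemma tot: "le x y \<or> le y x" using T unfolding totally_ordered_def by blast

lemma sqrt_uniq: "mul x x = mul y y \<Longrightarrow> x = y"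
  using N unfolding normal_incline_def by metis

lemma sq_le: "le (mul x x) (mul y y) \<Longrightarrow> le x y"
proof -
  assume h: "le (mul x x) (mul y y)"
  show "le x y"
  proof (cases "le x y")
    case False
    then have "le y x" using tot by blast
    then have "le (mul y y) (mul x x)" using mono2 by blast
    then have "mul x x = mul y y" using h le_antisym by blast
    then show ?thesis using sqrt_uniq le_refl by metis
  qed simp
qed

lemma sqrt_ex: "mul (THE c. mul c c = x) (THE c. mul c c = x) = x"
proof -
  have "\<exists>!c. mul c c = x" using N unfolding normal_incline_def by blast
  then show ?thesis by (rule theI')
qed

lemma one_ex: "\<exists>e. \<forall>x. mul e x = x" using N unfolding normal_incline_def by blast

lemma div_ex: assumes "le y x" shows "\<exists>t. y = mul x t"
proof -
  obtain e where e: "\<And>x. mul e x = x" using one_ex by blast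
  let ?J = "{mul x t | t. True}"
  have rJ: "r_ideal add mul ?J"
    unfolding r_ideal_def
  proof (intro conjI ballI allI)
    show "?J \<noteq> {}" by blast
  next
    fix u v assume "u \<in> ?J" "v \<in> ?J"
    then obtain s t where "u = mul x s" "v = mul x t" by blast
    then have "add u v = mul x (add s t)" by (simp add: dist)
    then show "add u v \<in> ?J" by blast
  next
    fix u a assume "u \<in> ?J"
    then obtain s where "u = mul x s" by blast
    then have "mul a u = mul x (mul a s)" by (simp add: m.left_commute)
    then show "mul a u \<in> ?J" by blast
  next
    fix u a assume "u \<in> ?J"
    then obtain s where "u = mul x s" by blast
    then have "mul u a = mul x (mul s a)" by (simp add: m.assoc)
    then show "mul u a \<in> ?J" by blast
  qed
  have "x = mul x e" using e[of x] by (simp add: m.commute)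
  then have xJ: "x \<in> ?J" by blast
  have "gen_r_ideal add mul x \<subseteq> ?J"
    unfolding gen_r_ideal_def using rJ xJ by blast
  moreover have "x \<in> gen_r_ideal add mul x" unfolding gen_r_ideal_def by blast
  moreover have "lattice_ideal add (gen_r_ideal add mul x)"
    using N unfolding normal_incline_def by blast
  ultimately have "y \<in> ?J" using assms unfolding lattice_ideal_def by blast
  then show ?thesis by blast
qed

lemma zero_ex: "\<exists>z. is_zero add z" using N unfolding normal_incline_def by blast

lemma zero_mul: "is_zero add z \<Longrightarrow> mul z x = z"
  unfolding is_zero_def by (metis absorb)

lemma bigsum_mem_aux: "l < Suc m \<Longrightarrow> le (f l) (bigsum add f (Suc m))"
proof (induction m arbitrary: l)
  case 0 then show ?case by (simp add: le_refl)
next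
  case (Suc m)
  show ?case
  proof (cases "l = Suc m")
    case True then show ?thesis using le_add2 by simp
  next
    case False
    then have "l < Suc m" using Suc(2) by simp
    then have "le (f l) (bigsum add f (Suc m))" using Suc(1) by blast
    then show ?thesis using le_add1 le_trans by (metis bigsum.simps(3))
  qed
qed

lemma bigsum_mem: "l < n \<Longrightarrow> le (f l) (bigsum add f n)"
  using bigsum_mem_aux by (cases n) auto

lemma bigsum_le_aux: "(\<And>l. l < Suc m \<Longrightarrow> le (f l) c) \<Longrightarrow> le (bigsum add f (Suc m)) c"
proof (induction m)
  case 0 then show ?case by simp
next
  case (Suc m)
  then show ?case by (simp add: le_addI)
qed

lemma bigsum_le: "n \<ge> 1 \<Longrightarrow> (\<And>l. l < n \<Longrightarrow> le (f l) c) \<Longrightarrow> le (bigsum add f n) c"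
  using bigsum_le_aux by (cases n) auto

lemma bigsum_cong_aux: "(\<forall>l < Suc m. f l = g l) \<longrightarrow> bigsum add f (Suc m) = bigsum add g (Suc m)"
proof (induction m)
  case 0 then show ?case by simp
next
  case (Suc m)
  show ?case
  proof
    assume h: "\<forall>l < Suc (Suc m). f l = g l"
    then have "bigsum add f (Suc m) = bigsum add g (Suc m)" using Suc by simp
    moreover have "f (Suc m) = g (Suc m)" using h by simp
    ultimately show "bigsum add f (Suc (Suc m)) = bigsum add g (Suc (Suc m))" by simp
  qed
qed

lemma bigsum_cong: "(\<And>l. l < n \<Longrightarrow> f l = g l) \<Longrightarrow> bigsum add f n = bigsum add g n"
  using bigsum_cong_aux by (cases n) auto

lemma mm3: "matmul add mul C (transp_mat C) 3 i j =
   add (add (mul (C i 0) (C j 0)) (mul (C i 1) (C j 1))) (mul (C i 2) (C j 2))"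
  by (simp add: matmul_def transp_mat_def numeral_3_eq_3 numeral_2_eq_2)

lemma zero_facts: assumes "is_zero add z"
  shows "mul z x = z" "mul x z = z" "add z x = x" "add x z = x"
  using assms zero_mul[OF assms] m.commute a.commute unfolding is_zero_def by metis+

lemma sqabs: "add (mul (mul a r) (mul a r)) (mul a a) = mul a a"
proof -
  have "mul (mul a r) (mul a r) = mul (mul a a) (mul r r)" by (simp add: m.assoc m.commute m.left_commute)
  then show ?thesis using absorb2 by simp
qed

lemma sqabs2: "add (mul a a) (mul (mul a r) (mul a r)) = mul a a"
  using sqabs a.commute by metis

lemma key: assumes "le (mul r s) t"
  shows "add (mul (mul a r) (mul b s)) (mul a (mul b t)) = mul (mul a b) t"
proof -
  have "add (mul (mul a r) (mul b s)) (mul a (mul b t)) = mul (mul a b) (add (mul r s) t)"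
    by (simp add: dist m.assoc m.commute m.left_commute)
  also have "\<dots> = mul (mul a b) t" using assms by (simp add: le_def')
  finally show ?thesis .
qed

lemma key2: assumes "le (mul s r) t"
  shows "add (mul (mul b s) (mul a r)) (mul (mul b t) a) = mul (mul a b) t"
proof -
  have "add (mul (mul b s) (mul a r)) (mul (mul b t) a) = mul (mul a b) (add (mul s r) t)"
    by (simp add: dist m.assoc m.commute m.left_commute)
  also have "\<dots> = mul (mul a b) t" using assms by (simp add: le_def')
  finally show ?thesis .
qed

lemma sqabs3: "add (add (mul (mul a r) (mul a r)) (mul (mul a s) (mul a s))) (mul a a) = mul a a"
  by (simp add: a.assoc sqabs)

lemma LU_build:
  fixes A :: "nat \<Rightarrow> nat \<Rightarrow> 'a"
  assumes z: "is_zero add z"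
    and h00: "A 0 0 = mul d0 d0" and h11: "A 1 1 = mul d1 d1" and h22: "A 2 2 = mul d2 d2"
    and h01: "A 0 1 = mul (mul d0 d1) r1" and h10: "A 1 0 = A 0 1"
    and h02: "A 0 2 = mul (mul d0 d2) r2" and h20: "A 2 0 = A 0 2"
    and h12: "A 1 2 = mul (mul d1 d2) r12" and h21: "A 2 1 = A 1 2"
    and le: "le r1 r12"
  shows "LU_completely_positive3 add mul A"
proof -
  define C :: "nat \<Rightarrow> nat \<Rightarrow> 'a" where "C = (\<lambda>i j::nat. if i = 0 then (if j = 0 then d0 else z)
     else if i = 1 then (if j = 0 then mul d1 r1 else if j = 1 then d1 else z)
     else (if j = 0 then mul d2 r2 else if j = 1 then mul d2 r12 else d2))"
  have up: "\<forall>i<3. \<forall>j<3. i < j \<longrightarrow> is_zero add (C i j)"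
    using z unfolding C_def by auto
  have le2: "le (mul r1 r2) r12" using le_mul le le_trans by blast
  have le2': "le (mul r2 r1) r12" using le_mul2 le le_trans by blast
  have "\<forall>i<3. \<forall>j<3. A i j = matmul add mul C (transp_mat C) 3 i j"
  proof (intro allI impI)
    fix i j :: nat assume "i < 3" "j < 3"
    then have "i = 0 \<or> i = 1 \<or> i = 2" "j = 0 \<or> j = 1 \<or> j = 2" by auto
    then show "A i j = matmul add mul C (transp_mat C) 3 i j"
      unfolding mm3 C_def using h00 h11 h22 h01 h10 h02 h20 h12 h21
      apply (auto simp: zero_facts[OF z] sqabs sqabs2 sqabs3 key[OF le2] key2[OF le2'])
      apply (simp_all add: m.assoc m.commute m.left_commute)
      done
  qed
  then show ?thesis unfolding LU_completely_positive3_def using up by blast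
qed

lemma key3: assumes "le (mul s t) r"
  shows "add (mul (mul a r) b) (mul (mul a s) (mul b t)) = mul (mul a b) r"
proof -
  have "add (mul (mul a r) b) (mul (mul a s) (mul b t)) = mul (mul a b) (add r (mul s t))"
    by (simp add: dist m.assoc m.commute m.left_commute)
  also have "\<dots> = mul (mul a b) r" using assms by (simp add: le_def' a.commute)
  finally show ?thesis .
qed

lemma key4: assumes "le (mul t s) r"
  shows "add (mul b (mul a r)) (mul (mul b t) (mul a s)) = mul (mul a b) r"
proof -
  have "add (mul b (mul a r)) (mul (mul b t) (mul a s)) = mul (mul a b) (add r (mul t s))"
    by (simp add: dist m.assoc m.commute m.left_commute)
  also have "\<dots> = mul (mul a b) r" using assms by (simp add: le_def' a.commute)
  finally show ?thesis .
qed

lemma UL_build: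
  fixes A :: "nat \<Rightarrow> nat \<Rightarrow> 'a"
  assumes z: "is_zero add z"
    and h00: "A 0 0 = mul d0 d0" and h11: "A 1 1 = mul d1 d1" and h22: "A 2 2 = mul d2 d2"
    and h01: "A 0 1 = mul (mul d0 d1) r1" and h10: "A 1 0 = A 0 1"
    and h02: "A 0 2 = mul (mul d0 d2) r2" and h20: "A 2 0 = A 0 2"
    and h12: "A 1 2 = mul (mul d1 d2) r12" and h21: "A 2 1 = A 1 2"
    and le: "le r12 r1"
  shows "UL_completely_positive3 add mul A"
proof -
  define U :: "nat \<Rightarrow> nat \<Rightarrow> 'a" where "U = (\<lambda>i j::nat. if i = 0 then (if j = 0 then d0 else if j = 1 then mul d0 r1 else mul d0 r2)
     else if i = 1 then (if j = 0 then z else if j = 1 then d1 else mul d1 r12)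
     else (if j = 2 then d2 else z))"
  have lo: "\<forall>i<3. \<forall>j<3. j < i \<longrightarrow> is_zero add (U i j)"
    using z unfolding U_def by auto
  have le2: "le (mul r2 r12) r1" using le_mul2 le le_trans by blast
  have le2': "le (mul r12 r2) r1" using le_mul le le_trans by blast
  have "\<forall>i<3. \<forall>j<3. A i j = matmul add mul U (transp_mat U) 3 i j"
  proof (intro allI impI)
    fix i j :: nat assume "i < 3" "j < 3"
    then have "i = 0 \<or> i = 1 \<or> i = 2" "j = 0 \<or> j = 1 \<or> j = 2" by auto
    then show "A i j = matmul add mul U (transp_mat U) 3 i j"
      unfolding mm3 U_def using h00 h11 h22 h01 h10 h02 h20 h12 h21
      apply (auto simp: zero_facts[OF z] sqabs sqabs2 sqabs3 key3[OF le2] key4[OF le2'])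
      apply (simp_all add: m.assoc m.commute m.left_commute)
      done
  qed
  then show ?thesis unfolding UL_completely_positive3_def using lo by blast
qed

lemma bound:
  assumes k: "k \<ge> 1"
    and hi: "aii = bigsum add (\<lambda>l. mul (B i l) (B i l)) k"
    and hj: "ajj = bigsum add (\<lambda>l. mul (B j l) (B j l)) k"
    and hij: "aij = bigsum add (\<lambda>l. mul (B i l) (B j l)) k"
    and di: "mul di di = aii" and dj: "mul dj dj = ajj"
  shows "le aij (mul di dj)"
proof -
  have "\<And>l. l < k \<Longrightarrow> le (mul (B i l) (B j l)) (mul di dj)"
  proof -
    fix l assume l: "l < k"
    have "le (mul (B i l) (B i l)) (mul di di)" using bigsum_mem[OF l, of "\<lambda>l. mul (B i l) (B i l)"] hi di by simp
    then have 1: "le (B i l) di" by (rule sq_le)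
    have "le (mul (B j l) (B j l)) (mul dj dj)" using bigsum_mem[OF l, of "\<lambda>l. mul (B j l) (B j l)"] hj dj by simp
    then have 2: "le (B j l) dj" by (rule sq_le)
    show "le (mul (B i l) (B j l)) (mul di dj)" using mono2[OF 1 2] .
  qed
  then show ?thesis using bigsum_le[OF k] hij by simp
qed

end


theorem mainTheorem10:
  fixes add mul :: "'a \<Rightarrow> 'a \<Rightarrow> 'a" and A :: "nat \<Rightarrow> nat \<Rightarrow> 'a"
  assumes "normal_incline add mul"
    and "totally_ordered add"
    and "completely_positive3 add mul A"
  shows "LU_completely_positive3 add mul A \<or> UL_completely_positive3 add mul A"
proof -
  interpret ninc add mul using assms(1,2) by unfold_locales
  obtain k B where k: "k \<ge> 1" and AB: "\<forall>i<3. \<forall>j<3. A i j = matmul add mul B (transp_mat B) k i j"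
    using assms(3) unfolding completely_positive3_def by blast
  have Ae: "A i j = bigsum add (\<lambda>l. mul (B i l) (B j l)) k" if "i < 3" "j < 3" for i j
    using AB that unfolding matmul_def transp_mat_def by simp
  have sym: "A i j = A j i" if "i < 3" "j < 3" for i j
    using Ae[OF that] Ae[OF that(2,1)] bigsum_cong[of k "\<lambda>l. mul (B i l) (B j l)" "\<lambda>l. mul (B j l) (B i l)"]
      mul_comm by metis
  define d where "d i = (THE c. mul c c = A i i)" for i
  have dsq: "mul (d i) (d i) = A i i" for i unfolding d_def by (rule sqrt_ex)
  have bd: "le (A i j) (mul (d i) (d j))" if "i < 3" "j < 3" for i j
    by (rule bound[OF k Ae[OF that(1) that(1)] Ae[OF that(2) that(2)] Ae[OF that] dsq dsq])
  obtain r1 where r1: "A 0 1 = mul (mul (d 0) (d 1)) r1" using div_ex[OF bd[of 0 1]] by auto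
  obtain r2 where r2: "A 0 2 = mul (mul (d 0) (d 2)) r2" using div_ex[OF bd[of 0 2]] by auto
  obtain r12 where r12: "A 1 2 = mul (mul (d 1) (d 2)) r12" using div_ex[OF bd[of 1 2]] by auto
  obtain z where z: "is_zero add z" using zero_ex by blast
  have s10: "A 1 0 = A 0 1" and s20: "A 2 0 = A 0 2" and s21: "A 2 1 = A 1 2" using sym by auto
  show ?thesis
  proof (cases "le r1 r12")
    case True
    then show ?thesis using LU_build[OF z dsq[symmetric] dsq[symmetric] dsq[symmetric] r1 s10 r2 s20 r12 s21] by blast
  next
    case False
    then have "le r12 r1" using tot by blast
    then show ?thesis using UL_build[OF z dsq[symmetric] dsq[symmetric] dsq[symmetric] r1 s10 r2 s20 r12 s21] by blast
  qed
qed

end
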